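(* Let $g:\mathbb{R}^2\to\mathbb{R}$, $g(x,y) = \bigl((x+1)^2+y^2\bigr)\bigl((x-1)^2+y^2\bigr)$, let $D=g^{-1}[0,2]$ (a 2-disk) and $f=g|_D:D\to\mathbb{R}$. Let $A=f^{-1}[0,0.5]$, which has two connected components $A_1\ni(-1,0)$ and $A_2\ni(1,0)$. Let $h:D\to D$, $h(x,y)=(-x,-y)$. Let $\omega$ be any volume form on $D$ such that $\mathrm{Vol}_\omega(A_1)\neq\mathrm{Vol}_\omega(A_2)$. Then the isotopy class $[h]\in\pi_0\mathcal{S}^+(f)$ does not contain any $k\in\mathcal{S}(f,\omega)$. Hence for such $\omega$ the map $j_0:\pi_0\mathcal{S}(f,\omega)\to\pi_0\mathcal{S}^+(f)$ induced by inclusion is not surjective.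
   Context: $\mathcal{S}(f)=\{h\in\mathrm{Diff}(D)\mid f\circ h=f\}$, $\mathcal{S}^+(f)$ is its subgroup of orientation-preserving diffeomorphisms, and $\mathcal{S}(f,\omega)$ is the subgroup of $h\in\mathcal{S}(f)$ with $h^*\omega=\omega$; these carry the $C^\infty$ topology and $\pi_0$ denotes the set of path components. Note $h\in\mathcal{S}^+(f)$ and $h(A_1)=A_2$. *)

theory Defs
  imports "HOL-Analysis.Analysis"
begin

definition g :: "real \<times> real \<Rightarrow> real" where
  "g p = (((fst p + 1)^2 + (snd p)^2) * ((fst p - 1)^2 + (snd p)^2))"

definition D :: "(real \<times> real) set" where
  "D = {p. 0 \<le> g p \<and> g p \<le> 2}"

definition f :: "real \<times> real \<Rightarrow> real" where
  "f p = g p"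

definition A :: "(real \<times> real) set" where
  "A = {p \<in> D. 0 \<le> f p \<and> f p \<le> 1/2}"

definition A1 :: "(real \<times> real) set" where
  "A1 = connected_component_set A (-1, 0)"

definition A2 :: "(real \<times> real) set" where
  "A2 = connected_component_set A (1, 0)"

definition hrot :: "real \<times> real \<Rightarrow> real \<times> real" where
  "hrot p = (- fst p, - snd p)"

definition dir :: "bool \<Rightarrow> real \<times> real" where
  "dir b = (if b then (0, 1) else (1, 0))"

definition partial :: "bool \<Rightarrow> (real \<times> real \<Rightarrow> 'b::real_normed_vector) \<Rightarrow> real \<times> real \<Rightarrow> 'b" where
  "partial b F p = vector_derivative (\<lambda>t. F (p + t *\<^sub>R dir b)) (at 0)"

fun iter_partial :: "bool list \<Rightarrow> (real \<times> real \<Rightarrow> 'b::real_normed_vector) \<Rightarrow> real \<times> real \<Rightarrow> 'b" where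
  "iter_partial [] F = F"
| "iter_partial (b # bs) F = partial b (iter_partial bs F)"

definition smooth_on_open :: "(real \<times> real) set \<Rightarrow> (real \<times> real \<Rightarrow> 'b::real_normed_vector) \<Rightarrow> bool" where
  "smooth_on_open U F \<longleftrightarrow> open U \<and>
     (\<forall>\<alpha>. continuous_on U (iter_partial \<alpha> F) \<and>
        (\<forall>b. \<forall>p\<in>U. (\<lambda>t. iter_partial \<alpha> F (p + t *\<^sub>R dir b)) differentiable (at 0)))"

definition smooth_on_D :: "(real \<times> real \<Rightarrow> 'b::real_normed_vector) \<Rightarrow> bool" where
  "smooth_on_D F \<longleftrightarrow> (\<exists>U. D \<subseteq> U \<and> smooth_on_open U F)"

(* Diff(D), elements represented by (arbitrary) extensions to the plane *)
definition Diff_D :: "(real \<times> real \<Rightarrow> real \<times> real) set" where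
  "Diff_D = {h. smooth_on_D h \<and> (\<forall>p\<in>D. h p \<in> D) \<and>
     (\<exists>k. smooth_on_D k \<and> (\<forall>p\<in>D. k p \<in> D \<and> k (h p) = p \<and> h (k p) = p))}"

definition jac :: "(real \<times> real \<Rightarrow> real \<times> real) \<Rightarrow> real \<times> real \<Rightarrow> real" where
  "jac h p = fst (partial False h p) * snd (partial True h p)
           - fst (partial True h p) * snd (partial False h p)"

definition S_f :: "(real \<times> real \<Rightarrow> real \<times> real) set" where
  "S_f = {h \<in> Diff_D. \<forall>p\<in>D. f (h p) = f p}"

definition S_plus :: "(real \<times> real \<Rightarrow> real \<times> real) set" where
  "S_plus = {h \<in> S_f. \<forall>p\<in>D. jac h p > 0}"

(* a volume form \<omega> = \<rho> dx\<and>dy on D *)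
definition volume_form :: "(real \<times> real \<Rightarrow> real) \<Rightarrow> bool" where
  "volume_form \<rho> \<longleftrightarrow> smooth_on_D \<rho> \<and> (\<forall>p\<in>D. \<rho> p \<noteq> 0)"

(* S(f,\<omega>): h^* \<omega> = \<omega>, i.e. \<rho>(h p) * det Dh(p) = \<rho>(p) *)
definition S_f_omega :: "(real \<times> real \<Rightarrow> real) \<Rightarrow> (real \<times> real \<Rightarrow> real \<times> real) set" where
  "S_f_omega \<rho> = {h \<in> S_f. \<forall>p\<in>D. \<rho> (h p) * jac h p = \<rho> p}"

definition vol :: "(real \<times> real \<Rightarrow> real) \<Rightarrow> (real \<times> real) set \<Rightarrow> real" where
  "vol \<rho> X = integral X \<rho>"

(* h and k lie in the same path component of S^+(f) with the C^\<infinity> topology: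
   a path t \<mapsto> H t in S^+(f), all of whose spatial derivatives are jointly
   continuous on [0,1] \<times> D (D compact, so this is continuity into C^\<infinity>(D,D)). *)
definition same_component_S_plus :: "(real \<times> real \<Rightarrow> real \<times> real) \<Rightarrow> (real \<times> real \<Rightarrow> real \<times> real) \<Rightarrow> bool" where
  "same_component_S_plus h k \<longleftrightarrow>
     (\<exists>H :: real \<Rightarrow> real \<times> real \<Rightarrow> real \<times> real.
        (\<forall>t\<in>{0..1}. H t \<in> S_plus) \<and>
        (\<forall>p\<in>D. H 0 p = h p \<and> H 1 p = k p) \<and>
        (\<forall>\<alpha>. continuous_on ({0..1} \<times> D) (\<lambda>(t, p). iter_partial \<alpha> (H t) p)))"

end

theory Submission
  imports Defs
begin


lemma partial_const: "partial b (\<lambda>p. c) = (\<lambda>p. 0)"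
  by (rule ext) (simp add: partial_def)

lemma hrot_line: "hrot (p + t *\<^sub>R dir b) = hrot p + t *\<^sub>R (- dir b)"
  by (cases p; cases "dir b") (simp add: hrot_def algebra_simps)

lemma partial_hrot: "partial b hrot = (\<lambda>p. - dir b)"
proof (rule ext)
  fix p
  have "((\<lambda>t. hrot p + t *\<^sub>R (- dir b)) has_vector_derivative (- dir b)) (at 0)"
    by (auto intro!: derivative_eq_intros)
  then show "partial b hrot p = - dir b"
    unfolding partial_def hrot_line by (rule vector_derivative_at)
qed

lemma iter_partial_hrot:
  "iter_partial al hrot = hrot \<or> (\<exists>c. iter_partial al hrot = (\<lambda>p. c))"
proof (induction al)
  case Nil then show ?case by simp
next
  case (Cons b al)
  have "\<exists>c. iter_partial (b # al) hrot = (\<lambda>p. c)"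
  proof (cases "iter_partial al hrot = hrot")
    case True then show ?thesis by (intro exI[of _ "- dir b"]) (simp add: partial_hrot)
  next
    case False
    then obtain c where "iter_partial al hrot = (\<lambda>p. c)" using Cons by blast
    then show ?thesis by (intro exI[of _ 0]) (simp add: partial_const)
  qed
  then show ?case by blast
qed


lemma line_deriv:
  assumes "smooth_on_open U F" "q \<in> U"
  shows "((\<lambda>t. F (q + t *\<^sub>R dir b)) has_vector_derivative partial b F q) (at 0)"
proof -
  have "(\<lambda>t. iter_partial [] F (q + t *\<^sub>R dir b)) differentiable (at 0)"
    using assms unfolding smooth_on_open_def by blast
  then show ?thesis unfolding partial_def by (simp add: vector_derivative_works)
qed

lemma line_deriv_x:
  assumes "smooth_on_open U F" "(x, y) \<in> U"
  shows "((\<lambda>s. F (s, y)) has_derivative (\<lambda>t. t *\<^sub>R partial False F (x, y))) (at x)"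
proof -
  have h: "((\<lambda>t. F ((x, y) + t *\<^sub>R dir False)) has_vector_derivative partial False F (x, y)) (at 0)"
    by (rule line_deriv[OF assms])
  have e: "(\<lambda>t. F ((x, y) + t *\<^sub>R dir False)) = (\<lambda>t. F (x + t, y))"
    by (simp add: dir_def)
  have h1: "((\<lambda>s. s - x) has_vector_derivative 1) (at x)"
    by (auto intro!: derivative_eq_intros)
  have "(((\<lambda>t. F (x + t, y)) \<circ> (\<lambda>s. s - x)) has_vector_derivative (1 *\<^sub>R partial False F (x, y))) (at x)"
    by (rule vector_diff_chain_at[OF h1]) (use h e in simp)
  then show ?thesis by (simp add: o_def has_vector_derivative_def)
qed

lemma line_deriv_y:
  assumes "smooth_on_open U F" "(x, y) \<in> U"
  shows "((\<lambda>s. F (x, s)) has_derivative (\<lambda>t. t *\<^sub>R partial True F (x, y))) (at y)"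
proof -
  have h: "((\<lambda>t. F ((x, y) + t *\<^sub>R dir True)) has_vector_derivative partial True F (x, y)) (at 0)"
    by (rule line_deriv[OF assms])
  have e: "(\<lambda>t. F ((x, y) + t *\<^sub>R dir True)) = (\<lambda>t. F (x, y + t))"
    by (simp add: dir_def)
  have h1: "((\<lambda>s. s - y) has_vector_derivative 1) (at y)"
    by (auto intro!: derivative_eq_intros)
  have "(((\<lambda>t. F (x, y + t)) \<circ> (\<lambda>s. s - y)) has_vector_derivative (1 *\<^sub>R partial True F (x, y))) (at y)"
    by (rule vector_diff_chain_at[OF h1]) (use h e in simp)
  then show ?thesis by (simp add: o_def has_vector_derivative_def)
qed

lemma smooth_cont_partial:
  assumes "smooth_on_open U F"
  shows "continuous_on U (partial b F)" "continuous_on U F" "open U"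
proof -
  have "continuous_on U (iter_partial [b] F)" "continuous_on U (iter_partial [] F)"
    using assms unfolding smooth_on_open_def by blast+
  then show "continuous_on U (partial b F)" "continuous_on U F" by simp_all
  show "open U" using assms unfolding smooth_on_open_def by blast
qed

lemma smooth_has_derivative:
  fixes F :: "real \<times> real \<Rightarrow> 'b::real_normed_vector"
  assumes sm: "smooth_on_open U F" and pU: "p \<in> U"
  shows "(F has_derivative (\<lambda>q. fst q *\<^sub>R partial False F p + snd q *\<^sub>R partial True F p)) (at p)"
proof -
  obtain x0 y0 where p: "p = (x0, y0)" by (cases p)
  have oU: "open U" using smooth_cont_partial[OF sm] by blast
  obtain r where r: "r > 0" "ball p r \<subseteq> U" using oU pU open_contains_ball by blast
  define e where "e = r / sqrt 2"
  have e0: "e > 0" using r by (simp add: e_def)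
  define X where "X = ball x0 e"
  define Y where "Y = ball y0 e"
  have XY: "(x, y) \<in> U" if "x \<in> X" "y \<in> Y" for x y
  proof -
    have "dist x0 x < r / sqrt 2" "dist y0 y < r / sqrt 2" using that by (auto simp: X_def Y_def e_def)
    then have "sqrt ((dist x0 x)\<^sup>2 + (dist y0 y)\<^sup>2) < r"
      by (intro real_sqrt_sum_squares_less) auto
    then have "(x, y) \<in> ball p r" by (simp add: p dist_prod_def)
    then show ?thesis using r by blast
  qed
  have fx: "((\<lambda>x. F (x, y0)) has_derivative (\<lambda>t. t *\<^sub>R partial False F (x0, y0))) (at x0 within X)"
    using line_deriv_x[OF sm] pU p has_derivative_at_withinI by blast
  have fy: "((\<lambda>y. F (x, y)) has_derivative blinfun_apply (blinfun_scaleR_left (partial True F (x, y)))) (at y within Y)"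
    if "x \<in> X" "y \<in> Y" for x y
    using line_deriv_y[OF sm XY[OF that]] has_derivative_at_withinI by simp
  have c1: "continuous (at p) (partial True F)"
    using smooth_cont_partial(1)[OF sm] oU pU continuous_on_eq_continuous_at by blast
  have "continuous (at p) (\<lambda>q. blinfun_scaleR_left (partial True F q))"
    by (rule bounded_linear.continuous[OF bounded_linear_blinfun_scaleR_left c1])
  then have fyc: "continuous (at (x0, y0) within X \<times> Y) (\<lambda>(x, y). blinfun_scaleR_left (partial True F (x, y)))"
    by (simp add: p split_def continuous_at_imp_continuous_within)
  have hd: "((\<lambda>(x, y). F (x, y)) has_derivative (\<lambda>(tx, ty). tx *\<^sub>R partial False F (x0, y0) + blinfun_apply (blinfun_scaleR_left (partial True F (x0, y0))) ty)) (at (x0, y0) within X \<times> Y)"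
    by (rule has_derivative_partialsI[OF fx fy fyc]) (auto simp: Y_def e0)
  have atw: "at (x0, y0) within X \<times> Y = at (x0, y0)"
    by (rule at_within_open) (auto simp: X_def Y_def e0 open_Times)
  have e1: "(\<lambda>(x, y). F (x, y)) = F" by auto
  have e2: "(\<lambda>(tx, ty). tx *\<^sub>R partial False F (x0, y0) + blinfun_apply (blinfun_scaleR_left (partial True F (x0, y0))) ty)
     = (\<lambda>q. fst q *\<^sub>R partial False F (x0, y0) + snd q *\<^sub>R partial True F (x0, y0))"
    by (auto simp: fun_eq_iff)
  show ?thesis using hd unfolding atw e1 e2 p .
qed



definition vp :: "real^2 \<Rightarrow> real \<times> real" where "vp v = (v $ 1, v $ 2)"
definition pv :: "real \<times> real \<Rightarrow> real^2" where "pv p = fst p *\<^sub>R axis 1 1 + snd p *\<^sub>R axis 2 1"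

lemma pv_nth [simp]: "pv p $ 1 = fst p" "pv p $ 2 = snd p"
  by (simp_all add: pv_def axis_def)

lemma vp_pv [simp]: "vp (pv p) = p" by (simp add: vp_def)

lemma pv_vp [simp]: "pv (vp v) = v"
  unfolding vec_eq_iff forall_2 by (simp add: vp_def)

lemma vp_axis [simp]: "vp (axis 1 1) = (1, 0)" "vp (axis 2 1) = (0, 1)"
  by (simp_all add: vp_def axis_def)

lemma has_derivative_vp [derivative_intros]: "(vp has_derivative vp) F"
proof -
  have "bounded_linear (\<lambda>v::real^2. (v $ 1, v $ 2))"
    by (intro bounded_linear_Pair bounded_linear_vec_nth)
  then show ?thesis unfolding vp_def[abs_def] by (rule bounded_linear_imp_has_derivative)
qed

lemma has_derivative_pv [derivative_intros]: "(pv has_derivative pv) F"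
proof -
  have "((\<lambda>p. fst p *\<^sub>R axis 1 1 + snd p *\<^sub>R axis 2 1) has_derivative (\<lambda>p. fst p *\<^sub>R (axis 1 1 :: real^2) + snd p *\<^sub>R axis 2 1)) F"
    by (auto intro!: derivative_eq_intros)
  then show ?thesis by (simp add: pv_def[abs_def])
qed

lemma continuous_vp: "continuous_on S vp"
  unfolding vp_def[abs_def] by (intro continuous_intros)
lemma continuous_pv: "continuous_on S pv"
  unfolding pv_def[abs_def] by (intro continuous_intros)

lemma pv_cbox: "pv ` cbox a b = cbox (pv a) (pv b)"
proof
  show "pv ` cbox a b \<subseteq> cbox (pv a) (pv b)"
    by (cases a, cases b) (auto simp: mem_box_cart cbox_Pair_eq[symmetric] forall_2 cbox_Pair_iff)
next
  show "cbox (pv a) (pv b) \<subseteq> pv ` cbox a b"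
  proof
    fix v assume "v \<in> cbox (pv a) (pv b)"
    then have "vp v \<in> cbox a b"
      by (cases a, cases b) (auto simp: mem_box_cart forall_2 vp_def cbox_Pair_iff)
    then show "v \<in> pv ` cbox a b" by (metis image_eqI pv_vp)
  qed
qed

lemma vp_cbox: "vp ` cbox a b = cbox (vp a) (vp b)"
proof -
  have "pv ` cbox (vp a) (vp b) = cbox a b" by (simp add: pv_cbox)
  then have "vp ` (pv ` cbox (vp a) (vp b)) = vp ` cbox a b" by simp
  then show ?thesis by (simp add: image_image)
qed

lemma content_2: "measure lborel (cbox (u::real^2) v) = measure lborel (cbox (u$1) (v$1)) * measure lborel (cbox (u$2) (v$2))"
proof -
  have ex: "(\<exists>i::2. P i) \<longleftrightarrow> P 1 \<or> P 2" for P using forall_2[of "\<lambda>i. \<not> P i"] by blast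
  show ?thesis
    unfolding content_cbox_if_cart[of u v] interval_eq_empty_cart ex cbox_interval[of "u$1"] cbox_interval[of "u$2"] content_real_if UNIV_2
    by auto
qed

lemma content_vp: "measure lborel (vp ` cbox u v) = 1 * measure lborel (cbox u v)"
proof -
  have "vp ` cbox u v = cbox (vp u) (vp v)" by (rule vp_cbox)
  also have "\<dots> = cbox (u$1, u$2) (v$1, v$2)" by (simp add: vp_def)
  finally have e: "vp ` cbox u v = cbox (u$1, u$2) (v$1, v$2)" .
  show ?thesis unfolding e content_Pair content_2 by simp
qed

lemma content_pv: "measure lborel (pv ` cbox u v) = 1 * measure lborel (cbox u v)"
proof -
  obtain a b c d where u: "u = (a, b)" and v: "v = (c, d)" by (cases u, cases v)
  show ?thesis unfolding pv_cbox content_2 u v content_Pair by simp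
qed



lemma twiddle_vp:
  assumes "(F has_integral i) (cbox a b)"
  shows "((\<lambda>v. F (vp v)) has_integral i) (pv ` cbox a b)"
proof -
  have "((\<lambda>x. F (vp x)) has_integral (1 / 1) *\<^sub>R i) (pv ` cbox a b)"
  proof (rule has_integral_twiddle[where g = vp and h = pv])
    show "\<exists>w z. vp ` cbox u v = cbox w z" for u v by (metis vp_cbox)
    show "\<exists>w z. pv ` cbox u v = cbox w z" for u v by (metis pv_cbox)
    show "continuous (at x) vp" for x using has_derivative_vp has_derivative_continuous by blast
  qed (auto simp: content_vp assms)
  then show ?thesis by simp
qed

lemma twiddle_pv:
  assumes "(G has_integral i) (cbox a b)"
  shows "((\<lambda>p. G (pv p)) has_integral i) (vp ` cbox a b)"
proof -
  have "((\<lambda>x. G (pv x)) has_integral (1 / 1) *\<^sub>R i) (vp ` cbox a b)"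
  proof (rule has_integral_twiddle[where g = pv and h = vp])
    show "\<exists>w z. vp ` cbox u v = cbox w z" for u v by (metis vp_cbox)
    show "\<exists>w z. pv ` cbox u v = cbox w z" for u v by (metis pv_cbox)
    show "continuous (at x) pv" for x using has_derivative_pv has_derivative_continuous by blast
  qed (auto simp: content_pv assms)
  then show ?thesis by simp
qed

lemma inj_pv: "inj pv" by (metis injI vp_pv)

lemma transfer_has_integral:
  fixes F :: "real \<times> real \<Rightarrow> 'b::banach"
  assumes "bounded S"
  shows "(F has_integral i) S \<longleftrightarrow> ((\<lambda>v. F (vp v)) has_integral i) (pv ` S)"
proof -
  obtain a where Sa: "S \<subseteq> cbox (-a) a" using bounded_subset_cbox_symmetric[OF assms] by blast
  have mem: "vp v \<in> S \<longleftrightarrow> v \<in> pv ` S" for v by (metis image_iff pv_vp vp_pv)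
  have mem2: "pv p \<in> pv ` S \<longleftrightarrow> p \<in> S" for p using inj_pv by (simp add: inj_image_mem_iff)
  have sub: "pv ` S \<subseteq> cbox (pv (-a)) (pv a)" using Sa pv_cbox by blast
  show ?thesis
  proof
    assume "(F has_integral i) S"
    then have "((\<lambda>x. if x \<in> S then F x else 0) has_integral i) (cbox (-a) a)"
      using has_integral_restrict[OF Sa] by blast
    from twiddle_vp[OF this]
    have "((\<lambda>v. if v \<in> pv ` S then F (vp v) else 0) has_integral i) (cbox (pv (-a)) (pv a))"
      by (simp add: mem pv_cbox)
    then show "((\<lambda>v. F (vp v)) has_integral i) (pv ` S)"
      using has_integral_restrict[OF sub] by blast
  next
    assume "((\<lambda>v. F (vp v)) has_integral i) (pv ` S)"
    then have "((\<lambda>v. if v \<in> pv ` S then F (vp v) else 0) has_integral i) (cbox (pv (-a)) (pv a))"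
      by (subst has_integral_restrict[OF sub])
    from twiddle_pv[OF this]
    have "((\<lambda>x. if x \<in> S then F x else 0) has_integral i) (cbox (-a) a)"
      by (simp add: mem2 vp_cbox cong: if_cong)
    then show "(F has_integral i) S"
      using has_integral_restrict[OF Sa] by blast
  qed
qed

lemma transfer_integral:
  fixes F :: "real \<times> real \<Rightarrow> 'b::banach"
  assumes "bounded S"
  shows "integral S F = integral (pv ` S) (\<lambda>v. F (vp v))"
proof (cases "F integrable_on S")
  case True
  then show ?thesis
    using transfer_has_integral[OF assms] by (metis integrable_integral integral_unique)
next
  case False
  then have "\<not> (\<lambda>v. F (vp v)) integrable_on (pv ` S)"
    using transfer_has_integral[OF assms] by (metis integrable_on_def)
  then show ?thesis using False by (simp add: not_integrable_integral)
qed



lemma abs_int_compact: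
  fixes f :: "'a::euclidean_space \<Rightarrow> 'b::euclidean_space"
  assumes "compact S" "continuous_on S f"
  shows "f absolutely_integrable_on S"
proof -
  have Sl: "S \<in> lmeasurable" by (rule lmeasurable_compact[OF assms(1)])
  then have S: "S \<in> sets lebesgue" by (simp add: fmeasurable_def)
  have "bounded (f ` S)" using compact_continuous_image[OF assms(2,1)] compact_imp_bounded by blast
  then obtain B where B: "\<And>x. x \<in> S \<Longrightarrow> norm (f x) \<le> B" by (auto simp: bounded_iff)
  show ?thesis
    by (rule measurable_bounded_by_integrable_imp_absolutely_integrable[where g = "\<lambda>_. B"])
       (auto simp: continuous_imp_measurable_on_sets_lebesgue[OF assms(2) S] S integrable_on_const[OF Sl] B)
qed

lemma g_alt: "g p = ((fst p)\<^sup>2 + (snd p)\<^sup>2 + 1)\<^sup>2 - 4 * (fst p)\<^sup>2"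
  by (simp add: g_def power2_eq_square algebra_simps)

lemma g_nonneg: "0 \<le> g p"
  by (simp add: g_def)

lemma g_cont: "continuous_on S g"
  unfolding g_def by (intro continuous_intros)

lemma D_bounded: "bounded D"
proof -
  have "norm p \<le> 2" if "p \<in> D" for p
  proof -
    obtain x y where p: "p = (x, y)" by (cases p)
    have "g p \<le> 2" using that by (simp add: D_def)
    then have h: "(x\<^sup>2 + y\<^sup>2 + 1)\<^sup>2 - 4 * x\<^sup>2 \<le> 2" by (simp add: g_alt p)
    have "x\<^sup>2 + y\<^sup>2 \<le> 4"
    proof (rule ccontr)
      assume "\<not> ?thesis"
      then have r: "x\<^sup>2 + y\<^sup>2 > 4" by simp
      have r3: "3 < x\<^sup>2 + y\<^sup>2 - 1" using r by simp
      have "(3::real)\<^sup>2 < (x\<^sup>2 + y\<^sup>2 - 1)\<^sup>2" by (rule power_strict_mono[OF r3]) auto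
      then have "9 < (x\<^sup>2 + y\<^sup>2 - 1)\<^sup>2" by simp
      also have "\<dots> = (x\<^sup>2 + y\<^sup>2 + 1)\<^sup>2 - 4 * (x\<^sup>2 + y\<^sup>2)" by (simp add: power2_eq_square algebra_simps)
      also have "\<dots> \<le> (x\<^sup>2 + y\<^sup>2 + 1)\<^sup>2 - 4 * x\<^sup>2" by simp
      finally show False using h by simp
    qed
    then have "sqrt (x\<^sup>2 + y\<^sup>2) \<le> sqrt 4" by (rule real_sqrt_le_mono)
    then have "sqrt (x\<^sup>2 + y\<^sup>2) \<le> 2" by simp
    then show ?thesis by (simp add: p norm_Pair)
  qed
  then show ?thesis unfolding bounded_iff by blast
qed

lemma A_eq: "A = {p. g p \<le> 1/2}"
  by (auto simp: A_def D_def f_def g_nonneg)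

lemma A_sub_D: "A \<subseteq> D" by (auto simp: A_def)

lemma A_compact: "compact A"
proof -
  have "closed A" unfolding A_eq by (intro closed_Collect_le continuous_intros) (simp add: g_def, intro continuous_intros)
  moreover have "bounded A" using D_bounded A_sub_D bounded_subset by blast
  ultimately show ?thesis by (simp add: compact_eq_bounded_closed)
qed

lemma A1_compact: "compact A1"
  unfolding A1_def using A_compact
  by (meson bounded_subset closed_connected_component compact_eq_bounded_closed connected_component_subset)

lemma A2_compact: "compact A2"
  unfolding A2_def using A_compact
  by (meson bounded_subset closed_connected_component compact_eq_bounded_closed connected_component_subset)

lemma m10_A: "(-1, 0) \<in> A" and p10_A: "(1, 0) \<in> A"
  by (simp_all add: A_eq g_def)

lemma m10_A1: "(-1, 0) \<in> A1" and p10_A2: "(1, 0) \<in> A2"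
  using m10_A p10_A by (simp_all add: A1_def A2_def)

lemma A1_sub: "A1 \<subseteq> A" and A2_sub: "A2 \<subseteq> A"
  by (simp_all add: A1_def A2_def connected_component_subset)

lemma g_hrot: "g (hrot p) = g p"
  by (simp add: g_def hrot_def power2_eq_square algebra_simps)

lemma segment_D: "closed_segment (-1, 0) (1, 0) \<subseteq> D"
proof
  fix p assume "p \<in> closed_segment ((-1::real), (0::real)) (1, 0)"
  then obtain u :: real where u: "0 \<le> u" "u \<le> 1" "p = (1 - u) *\<^sub>R (-1, 0) + u *\<^sub>R (1, 0)"
    by (auto simp: in_segment)
  then have p: "p = (2 * u - 1, 0)" by (simp add: algebra_simps)
  have "g p = ((2*u-1)\<^sup>2 - 1)\<^sup>2" by (simp add: p g_def power2_eq_square algebra_simps)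
  moreover have "\<bar>2*u-1\<bar> \<le> 1" using u by simp
  then have "(2*u-1)\<^sup>2 \<le> 1" by (simp only: abs_square_le_1)
  then have "\<bar>(2*u-1)\<^sup>2 - 1\<bar> \<le> 1" by simp
  then have "((2*u-1)\<^sup>2 - 1)\<^sup>2 \<le> 1" by (simp only: abs_square_le_1)
  ultimately have "g p \<le> 1" by simp
  then show "p \<in> D" by (simp add: D_def g_nonneg)
qed



lemma same_sign:
  assumes vf: "volume_form \<rho>" and p: "p \<in> A1" and q: "q \<in> A2"
  shows "0 < \<rho> p * \<rho> q"
proof -
  obtain U where DU: "D \<subseteq> U" and sm: "smooth_on_open U \<rho>" and nz: "\<forall>x\<in>D. \<rho> x \<noteq> 0"
    using vf unfolding volume_form_def smooth_on_D_def by blast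
  have cD: "continuous_on D \<rho>" using smooth_cont_partial(2)[OF sm] DU continuous_on_subset by blast
  define C where "C = A1 \<union> closed_segment (-1, 0) (1, 0) \<union> A2"
  have cA1: "connected A1" by (simp add: A1_def)
  have cA2: "connected A2" by (simp add: A2_def)
  have i1: "(-1, 0) \<in> A1 \<inter> closed_segment (-1, 0) (1, 0)" using m10_A1 by simp
  have c1: "connected (A1 \<union> closed_segment (-1, 0) (1, 0))"
    by (rule connected_Un[OF cA1 connected_segment]) (use i1 in blast)
  have i2: "(1, 0) \<in> (A1 \<union> closed_segment (-1, 0) (1, 0)) \<inter> A2" using p10_A2 by simp
  have "connected C" unfolding C_def
    by (rule connected_Un[OF c1 cA2]) (use i2 in blast)
  moreover have CD: "C \<subseteq> D" unfolding C_def using A1_sub A2_sub A_sub_D segment_D by blast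
  ultimately have cc: "connected (\<rho> ` C)"
    using connected_continuous_image cD continuous_on_subset by blast
  have pC: "p \<in> C" and qC: "q \<in> C" using p q by (auto simp: C_def)
  show ?thesis
  proof (rule ccontr)
    assume "\<not> ?thesis"
    then have "\<rho> p \<le> 0 \<and> 0 \<le> \<rho> q \<or> \<rho> q \<le> 0 \<and> 0 \<le> \<rho> p"
      by (smt (verit) mult_neg_neg mult_pos_pos)
    then have "\<exists>z\<in>\<rho> ` C. z \<bullet> 1 = 0"
    proof
      assume "\<rho> p \<le> 0 \<and> 0 \<le> \<rho> q"
      then show ?thesis using connected_ivt_component[OF cc, of "\<rho> p" "\<rho> q" 1 0] pC qC by auto
    next
      assume "\<rho> q \<le> 0 \<and> 0 \<le> \<rho> p"
      then show ?thesis using connected_ivt_component[OF cc, of "\<rho> q" "\<rho> p" 1 0] pC qC by auto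
    qed
    then show False using nz CD by auto
  qed
qed

lemma key:
  assumes vf: "volume_form \<rho>" and kS: "k \<in> S_f_omega \<rho>" and same: "same_component_S_plus hrot k"
  shows "vol \<rho> A1 = vol \<rho> A2"
proof -
  obtain H :: "real \<Rightarrow> real \<times> real \<Rightarrow> real \<times> real" where
    H1: "\<forall>t\<in>{0..1}. H t \<in> S_plus" and H2: "\<forall>p\<in>D. H 0 p = hrot p \<and> H 1 p = k p"
    and H3: "\<forall>al. continuous_on ({0..1} \<times> D) (\<lambda>(t, p). iter_partial al (H t) p)"
    using same unfolding same_component_S_plus_def by blast
  have cH: "continuous_on ({0..1} \<times> D) (\<lambda>(t, p). H t p)" using H3[rule_format, of "[]"] by simp
  have m10D: "(-1, 0) \<in> D" using m10_A A_sub_D by blast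
  have "continuous_on {0..1} (\<lambda>t::real. (t, (-1::real, 0::real)))" by (intro continuous_intros)
  from continuous_on_compose2[OF cH this]
  have cpath: "continuous_on {0..1} (\<lambda>t. H t (-1, 0))" using m10D by auto
  have HD: "H t p \<in> D \<and> f (H t p) = f p" if "t \<in> {0..1}" "p \<in> D" for t p
    using H1 that unfolding S_plus_def S_f_def Diff_D_def by blast
  have f10: "f (-1, 0) = 0" by (simp add: f_def g_def)
  have pathA: "(\<lambda>t. H t (-1, 0)) ` {0..1} \<subseteq> A"
    using HD[OF _ m10D] f10 by (auto simp: A_def)
  have "connected ((\<lambda>t. H t (-1, 0)) ` {0..1::real})"
    using connected_continuous_image[OF cpath] by simp
  moreover have "(1, 0) \<in> (\<lambda>t. H t (-1, 0)) ` {0..1::real}"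
  proof -
    have "H 0 (-1, 0) = (1, 0)" using H2 m10D by (simp add: hrot_def)
    then show ?thesis by (metis atLeastAtMost_iff image_eqI order_refl zero_le_one)
  qed
  ultimately have "(\<lambda>t. H t (-1, 0)) ` {0..1} \<subseteq> A2"
    unfolding A2_def using pathA connected_component_maximal by metis
  moreover have "H 1 (-1, 0) \<in> (\<lambda>t. H t (-1, 0)) ` {0..1}" by (rule image_eqI[of _ _ 1]) auto
  ultimately have "H 1 (-1, 0) \<in> A2" by blast
  then have k10: "k (-1, 0) \<in> A2" using H2 m10D by simp
  from kS have kD: "k \<in> Diff_D" and kf: "\<forall>p\<in>D. f (k p) = f p" and kr: "\<forall>p\<in>D. \<rho> (k p) * jac k p = \<rho> p"
    unfolding S_f_omega_def S_f_def by auto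
  from kD obtain ki where smk: "smooth_on_D k" and kDD: "\<forall>p\<in>D. k p \<in> D"
    and smki: "smooth_on_D ki" and ki: "\<forall>p\<in>D. ki p \<in> D \<and> ki (k p) = p \<and> k (ki p) = p"
    unfolding Diff_D_def by blast
  obtain U where DU: "D \<subseteq> U" and smU: "smooth_on_open U k" using smk smooth_on_D_def by blast
  obtain V where DV: "D \<subseteq> V" and smV: "smooth_on_open V ki" using smki smooth_on_D_def by blast
  have ck: "continuous_on D k" using smooth_cont_partial(2)[OF smU] DU continuous_on_subset by blast
  have cki: "continuous_on D ki" using smooth_cont_partial(2)[OF smV] DV continuous_on_subset by blast
  have kA: "k p \<in> A" if "p \<in> A" for p using that kDD kf by (auto simp: A_def)
  have kiA: "ki p \<in> A" if "p \<in> A" for p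
  proof -
    have "p \<in> D" using that by (simp add: A_def)
    then have "ki p \<in> D" "f (ki p) = f p" using ki kf by (metis, metis)
    then show ?thesis using that by (auto simp: A_def)
  qed
  have A1D: "A1 \<subseteq> D" and A2D: "A2 \<subseteq> D" using A1_sub A2_sub A_sub_D by auto
  have "k ` A1 \<subseteq> connected_component_set A (k (-1, 0))"
  proof (rule connected_component_maximal)
    show "k (-1, 0) \<in> k ` A1" using m10_A1 by blast
    show "connected (k ` A1)"
      using connected_continuous_image[OF continuous_on_subset[OF ck A1D]] by (simp add: A1_def)
    show "k ` A1 \<subseteq> A" using A1_sub kA by blast
  qed
  then have kA1: "k ` A1 \<subseteq> A2" using connected_component_eq[OF k10[unfolded A2_def]] by (simp add: A2_def)
  have ki10: "ki (k (-1, 0)) = (-1, 0)" using ki m10D by blast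
  have "ki ` A2 \<subseteq> connected_component_set A (ki (k (-1, 0)))"
  proof (rule connected_component_maximal)
    show "ki (k (-1, 0)) \<in> ki ` A2" using k10 by blast
    show "connected (ki ` A2)"
      using connected_continuous_image[OF continuous_on_subset[OF cki A2D]] by (simp add: A2_def)
    show "ki ` A2 \<subseteq> A" using A2_sub kiA by blast
  qed
  then have kiA2: "ki ` A2 \<subseteq> A1" using ki10 by (simp add: A1_def)
  have kimg: "k ` A1 = A2"
  proof
    show "A2 \<subseteq> k ` A1"
    proof
      fix q assume "q \<in> A2"
      then have "ki q \<in> A1" "k (ki q) = q" using kiA2 ki A2D by auto
      then show "q \<in> k ` A1" by (metis image_eqI)
    qed
  qed (rule kA1)
  have injk: "inj_on k A1" by (rule inj_onI) (metis ki A1D subsetD)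
  have jacpos: "\<bar>jac k p\<bar> * \<rho> (k p) = \<rho> p" if "p \<in> A1" for p
  proof -
    have e: "\<rho> (k p) * jac k p = \<rho> p" using kr A1D that by blast
    have s: "0 < \<rho> p * \<rho> (k p)" using same_sign[OF vf that] kA1 that by blast
    have "\<rho> p * \<rho> (k p) = (\<rho> (k p))\<^sup>2 * jac k p" by (simp add: e[symmetric] power2_eq_square)
    then have "jac k p > 0" using s
      by (smt (verit) mult_nonneg_nonpos zero_le_power2)
    then show ?thesis using e by (simp add: mult.commute)
  qed
  define K' where "K' p = (\<lambda>q::real \<times> real. fst q *\<^sub>R partial False k p + snd q *\<^sub>R partial True k p)" for p
  define G where "G v = pv (k (vp v))" for v
  define G' where "G' v = (\<lambda>w. pv (K' (vp v) (vp w)))" for v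
  define S where "S = pv ` A1"
  define f0 where "f0 v = \<rho> (vp v) *\<^sub>R (1::real^1)" for v
  have Sc: "compact S" unfolding S_def using A1_compact compact_continuous_image continuous_pv by blast
  have der: "(G has_derivative G' v) (at v within S)" if "v \<in> S" for v
  proof -
    have "vp v \<in> U" using that DU A1D by (auto simp: S_def)
    then have kd: "(k has_derivative K' (vp v)) (at (vp v))"
      unfolding K'_def by (rule smooth_has_derivative[OF smU])
    have "((\<lambda>v. k (vp v)) has_derivative (\<lambda>w. K' (vp v) (vp w))) (at v)"
      by (rule has_derivative_compose[OF has_derivative_vp kd])
    from has_derivative_compose[OF this has_derivative_pv]
    have "(G has_derivative G' v) (at v)" by (simp add: G_def[abs_def] G'_def)
    then show ?thesis by (rule has_derivative_at_withinI)
  qed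
  have injG: "inj_on G S"
  proof (rule inj_onI)
    fix x y assume "x \<in> S" "y \<in> S" "G x = G y"
    then have "k (vp x) = k (vp y)" "vp x \<in> A1" "vp y \<in> A1" by (auto simp: G_def S_def dest: arg_cong[of _ _ vp])
    then have "vp x = vp y" using injk by (meson inj_onD)
    then show "x = y" by (metis pv_vp)
  qed
  have detG: "det (matrix (G' v)) = jac k (vp v)" for v
  proof -
    have m: "matrix (G' v) $ i $ j = G' v (axis j 1) $ i" for i j by (simp add: matrix_def)
    show ?thesis
      unfolding det_2 m by (simp add: G'_def K'_def jac_def)
  qed
  have GS: "G ` S = pv ` A2"
    unfolding S_def G_def image_image vp_pv kimg[symmetric] by (simp add: image_image)
  have cf0: "continuous_on (pv ` A2) f0"
  proof -
    have cr: "continuous_on D \<rho>"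
      using vf unfolding volume_form_def smooth_on_D_def
      by (meson continuous_on_subset smooth_cont_partial(2))
    have "continuous_on (pv ` A2) (\<lambda>v. \<rho> (vp v))"
      by (rule continuous_on_compose2[OF cr continuous_vp]) (use A2D in \<open>auto simp: image_image\<close>)
    then show ?thesis unfolding f0_def[abs_def] by (intro continuous_intros)
  qed
  have ai: "f0 absolutely_integrable_on (pv ` A2)"
    by (rule abs_int_compact[OF _ cf0]) (use A2_compact compact_continuous_image continuous_pv in blast)
  have "(\<lambda>x. \<bar>det (matrix (G' x))\<bar> *\<^sub>R f0 (G x)) absolutely_integrable_on S \<and>
        integral S (\<lambda>x. \<bar>det (matrix (G' x))\<bar> *\<^sub>R f0 (G x)) = integral (pv ` A2) f0"
    using has_absolute_integral_change_of_variables_compact[OF Sc der injG, of f0 "integral (pv ` A2) f0"]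
      ai GS by simp
  then have i1: "integral S (\<lambda>x. \<bar>det (matrix (G' x))\<bar> *\<^sub>R f0 (G x)) = integral (pv ` A2) f0" by blast
  have "integral S (\<lambda>x. \<bar>det (matrix (G' x))\<bar> *\<^sub>R f0 (G x)) = integral S f0"
  proof (rule integral_cong)
    fix x assume "x \<in> S"
    then have "vp x \<in> A1" by (auto simp: S_def)
    then show "\<bar>det (matrix (G' x))\<bar> *\<^sub>R f0 (G x) = f0 x"
      using jacpos by (simp add: detG f0_def G_def)
  qed
  then have "integral S f0 = integral (pv ` A2) f0" using i1 by simp
  then have "vec (integral S (\<lambda>x. f0 x $ 1)) = (vec (integral (pv ` A2) (\<lambda>x. f0 x $ 1)) :: real^1)"
    by (simp add: integral_on_1_eq[symmetric])
  then have "(vec (integral S (\<lambda>x. f0 x $ 1)) :: real^1) $ 1 = (vec (integral (pv ` A2) (\<lambda>x. f0 x $ 1)) :: real^1) $ 1"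
    by (rule arg_cong)
  then have "integral S (\<lambda>x. f0 x $ 1) = integral (pv ` A2) (\<lambda>x. f0 x $ 1)"
    by (simp only: vec_component)
  then have e: "integral (pv ` A1) (\<lambda>x. \<rho> (vp x)) = integral (pv ` A2) (\<lambda>x. \<rho> (vp x))"
    by (simp add: f0_def S_def)
  show ?thesis
    unfolding vol_def
    using transfer_integral[OF compact_imp_bounded[OF A1_compact], of \<rho>] transfer_integral[OF compact_imp_bounded[OF A2_compact], of \<rho>] e
    by simp
qed

lemma smooth_hrot: "smooth_on_D hrot"
proof -
  have "smooth_on_open UNIV hrot"
    unfolding smooth_on_open_def
  proof (intro conjI allI ballI)
    fix al :: "bool list" and b p
    show "continuous_on UNIV (iter_partial al hrot)"
      using iter_partial_hrot[of al] by (auto simp: hrot_def[abs_def] intro!: continuous_intros)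
    show "(\<lambda>t. iter_partial al hrot (p + t *\<^sub>R dir b)) differentiable at 0"
      using iter_partial_hrot[of al]
    proof
      assume e: "iter_partial al hrot = hrot"
      have "(\<lambda>t. hrot p + t *\<^sub>R (- dir b)) differentiable at 0" by (intro derivative_intros)
      then show ?thesis by (simp add: e hrot_line)
    next
      assume "\<exists>c. iter_partial al hrot = (\<lambda>p. c)"
      then show ?thesis by auto
    qed
  qed simp
  then show ?thesis unfolding smooth_on_D_def by blast
qed

lemma hrot_S_plus: "hrot \<in> S_plus"
proof -
  have hD: "\<forall>p\<in>D. hrot p \<in> D" by (simp add: D_def g_hrot)
  have hh: "hrot (hrot p) = p" for p by (simp add: hrot_def)
  have "hrot \<in> Diff_D" unfolding Diff_D_def using smooth_hrot hD hh by blast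
  moreover have "\<forall>p\<in>D. f (hrot p) = f p" by (simp add: f_def g_hrot)
  moreover have "jac hrot p = 1" for p by (simp add: jac_def partial_hrot dir_def)
  ultimately show ?thesis by (simp add: S_plus_def S_f_def)
qed

theorem lemma3p5:
  fixes \<rho> :: "real \<times> real \<Rightarrow> real"
  assumes "volume_form \<rho>"
    and "vol \<rho> A1 \<noteq> vol \<rho> A2"
  shows "hrot \<in> S_plus \<and> \<not> (\<exists>k \<in> S_f_omega \<rho>. same_component_S_plus hrot k)"
  using hrot_S_plus key[OF assms(1)] assms(2) by blast

end
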